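(* Let $\varphi$ be a skew-morphism of a finite group $A$ and let $\bar\varphi$ be the induced skew-morphism of $\bar A=A/\mathrm{Core}\,\varphi$. Then $\mathrm{Smooth}\,\varphi$ is a $\varphi$-invariant subgroup of $A$ and $\mathrm{Fix}\,\bar\varphi=\mathrm{Smooth}\,\varphi/\mathrm{Core}\,\varphi$. In particular: (i) $\mathrm{Smooth}\,\varphi=\mathrm{Core}\,\varphi$ if and only if $\mathrm{Fix}\,\bar\varphi$ is the trivial subgroup of $\bar A$; (ii) $\mathrm{Smooth}\,\varphi=A$ if and only if $\mathrm{Fix}\,\bar\varphi=\bar A$; (iii) if $\mathrm{Core}\,\varphi=1$ then $\mathrm{Smooth}\,\varphi=\mathrm{Fix}\,\varphi$.
   Context: A skew-morphism of a finite group $A$ is a permutation $\varphi$ of the set $A$ with $\varphi(1)=1$ for which there exists a function $\pi:A\to\mathbb{Z}_n$, where $n$ is the order of $\varphi$ as a permutation, such that $\varphi(xy)=\varphi(x)\varphi^{\pi(x)}(y)$ for all $x,y\in A$; $\pi$ is the power function. The kernel is $\mathrm{Ker}\,\varphi=\{x\in A:\pi(x)=1\}$, and the core is $\mathrm{Core}\,\varphi=\bigcap_{i=1}^n\varphi^i(\mathrm{Ker}\,\varphi)$, a $\varphi$-invariant normal subgroup of $A$ contained in $\mathrm{Ker}\,\varphi$. For a $\varphi$-invariant normal subgroup $N$, the induced skew-morphism $\bar\varphi$ of $A/N$ is $\bar\varphi(xN)=\varphi(x)N$. A subset $N$ is $\varphi$-invariant if $\varphi(N)=N$. $\mathrm{Fix}\,\psi$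 is the set of fixed points of $\psi$. $\mathrm{Smooth}\,\varphi=\{x\in A:\varphi(x)\in x\,\mathrm{Core}\,\varphi\}$. *)

theory Defs
  imports "HOL-Algebra.Algebra"
begin

definition perm_order :: "('a, 'b) monoid_scheme \<Rightarrow> ('a \<Rightarrow> 'a) \<Rightarrow> nat" where
  "perm_order G phi = (LEAST n. 0 < n \<and> (\<forall>x\<in>carrier G. (phi ^^ n) x = x))"

text \<open>phi is a skew-morphism of G with power function pw; the values of pw are
  represented by the residues 0..n-1 of Z_n, n the order of phi.\<close>
definition skew_morphism :: "('a, 'b) monoid_scheme \<Rightarrow> ('a \<Rightarrow> 'a) \<Rightarrow> ('a \<Rightarrow> nat) \<Rightarrow> bool" where
  "skew_morphism G phi pw \<longleftrightarrow>
     bij_betw phi (carrier G) (carrier G) \<and> phi \<one>\<^bsub>G\<^esub> = \<one>\<^bsub>G\<^esub> \<and>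
     (\<forall>x\<in>carrier G. pw x < perm_order G phi) \<and>
     (\<forall>x\<in>carrier G. \<forall>y\<in>carrier G.
        phi (x \<otimes>\<^bsub>G\<^esub> y) = phi x \<otimes>\<^bsub>G\<^esub> (phi ^^ pw x) y)"

definition skew_kernel :: "('a, 'b) monoid_scheme \<Rightarrow> ('a \<Rightarrow> 'a) \<Rightarrow> ('a \<Rightarrow> nat) \<Rightarrow> 'a set" where
  "skew_kernel G phi pw = {x \<in> carrier G. pw x mod perm_order G phi = 1 mod perm_order G phi}"

definition skew_core :: "('a, 'b) monoid_scheme \<Rightarrow> ('a \<Rightarrow> 'a) \<Rightarrow> ('a \<Rightarrow> nat) \<Rightarrow> 'a set" where
  "skew_core G phi pw = (\<Inter>i\<in>{1..perm_order G phi}. (phi ^^ i) ` skew_kernel G phi pw)"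

definition skew_smooth :: "('a, 'b) monoid_scheme \<Rightarrow> ('a \<Rightarrow> 'a) \<Rightarrow> ('a \<Rightarrow> nat) \<Rightarrow> 'a set" where
  "skew_smooth G phi pw = {x \<in> carrier G. phi x \<in> x <#\<^bsub>G\<^esub> skew_core G phi pw}"

text \<open>Induced map on A/N: xN \<mapsto> phi(x)N (N normal, cosets N #> x = x <# N).\<close>
definition induced_skew :: "('a, 'b) monoid_scheme \<Rightarrow> 'a set \<Rightarrow> ('a \<Rightarrow> 'a) \<Rightarrow> 'a set \<Rightarrow> 'a set" where
  "induced_skew G N phi C = N #>\<^bsub>G\<^esub> phi (SOME x. x \<in> C)"

definition fixset :: "'c set \<Rightarrow> ('c \<Rightarrow> 'c) \<Rightarrow> 'c set" where
  "fixset S f = {x \<in> S. f x = x}"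

end

theory Submission
  imports Defs
begin

lemma (in group) finite_closed_subgroup:
  assumes "finite H" "H \<subseteq> carrier G" "\<one> \<in> H" "\<And>x y. x \<in> H \<Longrightarrow> y \<in> H \<Longrightarrow> x \<otimes> y \<in> H"
  shows "subgroup H G"
proof
  fix x assume x: "x \<in> H"
  have xc: "x \<in> carrier G" using x assms(2) by blast
  have "(\<lambda>y. x \<otimes> y) ` H = H"
  proof (rule endo_inj_surj)
    show "(\<lambda>y. x \<otimes> y) ` H \<subseteq> H" using assms(4) x by blast
    show "inj_on (\<lambda>y. x \<otimes> y) H"
    proof (rule inj_onI)
      fix a b assume ab: "a \<in> H" "b \<in> H" "x \<otimes> a = x \<otimes> b"
      have "a \<in> carrier G" "b \<in> carrier G" using ab assms(2) by auto
      then show "a = b" using ab(3) xc by (metis inv_solve_left m_closed)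
    qed
  qed (use assms in auto)
  then obtain y where y: "y \<in> H" "x \<otimes> y = \<one>" using assms(3) by (metis imageE)
  then have "inv x = y" using xc assms(2) by (metis inv_comm inv_equality subsetD)
  then show "inv x \<in> H" using y by simp
qed (use assms in auto)

locale skw = group G for G (structure) +
  fixes phi :: "'a \<Rightarrow> 'a" and pw :: "'a \<Rightarrow> nat"
  assumes fin: "finite (carrier G)" and sk: "skew_morphism G phi pw"
begin

abbreviation "n \<equiv> perm_order G phi"
abbreviation "Ker \<equiv> skew_kernel G phi pw"
abbreviation "K \<equiv> skew_core G phi pw"

lemma bij: "bij_betw phi (carrier G) (carrier G)" using sk by (simp add: skew_morphism_def)
lemma phi_one[simp]: "phi \<one> = \<one>" using sk by (simp add: skew_morphism_def)
lemma pw_lt: "x \<in> carrier G \<Longrightarrow> pw x < n" using sk by (simp add: skew_morphism_def)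
lemma phi_mult: "x \<in> carrier G \<Longrightarrow> y \<in> carrier G \<Longrightarrow> phi (x \<otimes> y) = phi x \<otimes> (phi ^^ pw x) y"
  using sk by (simp add: skew_morphism_def)
lemma bijk: "bij_betw (phi ^^ k) (carrier G) (carrier G)" using bij by (rule bij_betw_funpow)
lemma phik_closed[simp]: "x \<in> carrier G \<Longrightarrow> (phi ^^ k) x \<in> carrier G"
  using bijk bij_betwE by blast
lemma phi_closed[simp]: "x \<in> carrier G \<Longrightarrow> phi x \<in> carrier G"
  using phik_closed[of x 1] by simp
lemma injk: "inj_on (phi ^^ k) (carrier G)" using bijk bij_betw_def by blast
lemma phik_one[simp]: "(phi ^^ k) \<one> = \<one>" by (induct k) auto

lemma order_exists: "\<exists>m. 0 < m \<and> (\<forall>x\<in>carrier G. (phi ^^ m) x = x)"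
proof -
  define f where "f = (\<lambda>k. restrict (phi ^^ k) (carrier G))"
  have "range f \<subseteq> (carrier G \<rightarrow>\<^sub>E carrier G)" unfolding f_def by auto
  moreover have "finite (carrier G \<rightarrow>\<^sub>E carrier G)" using fin by (simp add: finite_PiE)
  ultimately have "finite (range f)" by (meson finite_subset)
  hence "\<not> inj f" using finite_imageD by blast
  then obtain i j where ij: "f i = f j" "i < j" unfolding inj_def by (metis linorder_neqE_nat)
  have "\<forall>x\<in>carrier G. (phi ^^ (j - i)) x = x"
  proof
    fix x assume x: "x \<in> carrier G"
    have "(phi ^^ i) ((phi ^^ (j - i)) x) = (phi ^^ j) x"
      using ij(2) by (metis funpow_add le_add_diff_inverse less_imp_le o_apply)
    also have "\<dots> = (phi ^^ i) x" using ij(1) x unfolding f_def by (metis restrict_apply')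
    finally show "(phi ^^ (j - i)) x = x" using injk x by (meson inj_onD phik_closed)
  qed
  then show ?thesis using ij(2) by (intro exI[of _ "j - i"]) auto
qed

lemma n_pos: "0 < n" and n_id: "\<forall>x\<in>carrier G. (phi ^^ n) x = x"
  using LeastI_ex[OF order_exists] unfolding perm_order_def by auto

lemma n_min: "0 < m \<Longrightarrow> m < n \<Longrightarrow> \<exists>x\<in>carrier G. (phi ^^ m) x \<noteq> x"
  using not_less_Least[of m "\<lambda>m. 0 < m \<and> (\<forall>x\<in>carrier G. (phi ^^ m) x = x)"]
  unfolding perm_order_def by blast

lemma pow_nq: "x \<in> carrier G \<Longrightarrow> (phi ^^ (n * q)) x = x"
proof (induct q)
  case (Suc q)
  have "(phi ^^ (n * Suc q)) x = (phi ^^ n) ((phi ^^ (n * q)) x)"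
    by (simp add: funpow_add)
  then show ?case using Suc n_id by simp
qed simp

lemma pow_mod: "x \<in> carrier G \<Longrightarrow> (phi ^^ a) x = (phi ^^ (a mod n)) x"
proof -
  assume x: "x \<in> carrier G"
  have "a = a mod n + n * (a div n)" by simp
  then have "(phi ^^ a) x = (phi ^^ (a mod n)) ((phi ^^ (n * (a div n))) x)"
    by (metis funpow_add o_apply)
  then show ?thesis using pow_nq x by simp
qed

lemma aux_lt: "a < b \<Longrightarrow> b < n \<Longrightarrow> \<not> (\<forall>x\<in>carrier G. (phi ^^ a) x = (phi ^^ b) x)"
proof
  assume ab: "a < b" "b < n" and eq: "\<forall>x\<in>carrier G. (phi ^^ a) x = (phi ^^ b) x"
  have "\<forall>x\<in>carrier G. (phi ^^ (b - a)) x = x"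
  proof
    fix x assume x: "x \<in> carrier G"
    have "(phi ^^ a) ((phi ^^ (b - a)) x) = (phi ^^ b) x"
      using ab by (metis funpow_add le_add_diff_inverse less_imp_le o_apply)
    also have "\<dots> = (phi ^^ a) x" using eq x by simp
    finally show "(phi ^^ (b - a)) x = x" using injk x by (meson inj_onD phik_closed)
  qed
  moreover have "0 < b - a" "b - a < n" using ab by auto
  ultimately show False using n_min by blast
qed

lemma pow_eq_iff: "(\<forall>x\<in>carrier G. (phi ^^ a) x = (phi ^^ b) x) \<longleftrightarrow> a mod n = b mod n"
proof
  assume eq: "\<forall>x\<in>carrier G. (phi ^^ a) x = (phi ^^ b) x"
  then have eq': "\<forall>x\<in>carrier G. (phi ^^ (a mod n)) x = (phi ^^ (b mod n)) x"
    using pow_mod by metis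
  show "a mod n = b mod n"
  proof (rule linorder_cases[of "a mod n" "b mod n"])
    assume "a mod n < b mod n" then show ?thesis by (meson aux_lt eq' mod_less_divisor n_pos)
  next
    assume "b mod n < a mod n" then show ?thesis by (metis aux_lt eq' mod_less_divisor n_pos)
  qed
next
  assume "a mod n = b mod n" then show "\<forall>x\<in>carrier G. (phi ^^ a) x = (phi ^^ b) x"
    using pow_mod by metis
qed

lemma Ker_iff: "x \<in> Ker \<longleftrightarrow> x \<in> carrier G \<and> (\<forall>y\<in>carrier G. phi (x \<otimes> y) = phi x \<otimes> phi y)"
proof -
  have "x \<in> carrier G \<Longrightarrow> (\<forall>y\<in>carrier G. phi (x \<otimes> y) = phi x \<otimes> phi y) \<longleftrightarrow>
          (\<forall>y\<in>carrier G. (phi ^^ pw x) y = (phi ^^ 1) y)"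
    by (auto simp: phi_mult)
  then show ?thesis unfolding skew_kernel_def using pow_eq_iff by blast
qed

lemma Ker_pw1: "1 < n \<Longrightarrow> x \<in> Ker \<Longrightarrow> pw x = 1"
  unfolding skew_kernel_def using pw_lt by auto

lemma one_Ker: "\<one> \<in> Ker" by (auto simp: Ker_iff)

lemma Ker_mult: "x \<in> Ker \<Longrightarrow> y \<in> Ker \<Longrightarrow> x \<otimes> y \<in> Ker"
  by (auto simp: Ker_iff m_assoc)

lemma Ker_sub: "Ker \<subseteq> carrier G" by (auto simp: skew_kernel_def)

lemma K_char: "K = {x\<in>carrier G. \<forall>j. (phi ^^ j) x \<in> Ker}"
proof (intro equalityI subsetI)
  fix x assume x: "x \<in> K"
  have "x \<in> (phi ^^ n) ` Ker" using x n_pos unfolding skew_core_def by auto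
  then have xc: "x \<in> carrier G" using Ker_sub by auto
  have "(phi ^^ j) x \<in> Ker" for j
  proof -
    define i where "i = n - j mod n"
    have i: "i \<in> {1..n}" using n_pos unfolding i_def by (simp add: Suc_leI)
    have "x \<in> (phi ^^ i) ` Ker" using x i unfolding skew_core_def by blast
    then obtain k where k: "k \<in> Ker" "x = (phi ^^ i) k" by blast
    have "(phi ^^ j) x = (phi ^^ (j + i)) k" using k by (simp add: funpow_add)
    also have "\<dots> = (phi ^^ ((j + i) mod n)) k" using pow_mod k Ker_sub by blast
    also have "(j + i) mod n = 0"
    proof -
      have "(j + i) mod n = (j mod n + i) mod n" by (simp add: mod_add_left_eq)
      moreover have "j mod n + i = n" using n_pos unfolding i_def
        using mod_less_divisor[OF n_pos, of j] by linarith
      ultimately show ?thesis by simp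
    qed
    finally show ?thesis using k by simp
  qed
  then show "x \<in> {x\<in>carrier G. \<forall>j. (phi ^^ j) x \<in> Ker}" using xc by auto
next
  fix x assume x: "x \<in> {x\<in>carrier G. \<forall>j. (phi ^^ j) x \<in> Ker}"
  have "x \<in> (phi ^^ i) ` Ker" if i: "i \<in> {1..n}" for i
  proof
    show "(phi ^^ (n - i)) x \<in> Ker" using x by auto
    have "(phi ^^ i) ((phi ^^ (n - i)) x) = (phi ^^ n) x" using i
      by (metis atLeastAtMost_iff funpow_add le_add_diff_inverse o_apply)
    then show "x = (phi ^^ i) ((phi ^^ (n - i)) x)" using n_id x by auto
  qed
  then show "x \<in> K" unfolding skew_core_def by auto
qed

lemma K_sub: "K \<subseteq> carrier G" using K_char by auto
lemma K_Ker: "K \<subseteq> Ker" using K_char by (auto dest: spec[of _ 0])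
lemma K_phik: "x \<in> K \<Longrightarrow> (phi ^^ k) x \<in> K"
proof -
  assume x: "x \<in> K"
  have "(phi ^^ j) ((phi ^^ k) x) = (phi ^^ (j + k)) x" for j by (simp add: funpow_add)
  then show ?thesis using x K_char by auto
qed

lemma phiK: "phi ` K = K"
proof
  show "phi ` K \<subseteq> K" using K_phik[of _ 1] by auto
  show "K \<subseteq> phi ` K"
  proof
    fix x assume x: "x \<in> K"
    have "phi ((phi ^^ (n - 1)) x) = (phi ^^ n) x" using n_pos
      by (metis Suc_diff_1 funpow.simps(2) o_apply)
    then show "x \<in> phi ` K" using n_id x K_sub K_phik by (metis image_eqI subsetD)
  qed
qed

definition sig where "sig x k = (\<Sum>i<k. pw ((phi ^^ i) x))"

lemma iter_mult: "x \<in> carrier G \<Longrightarrow> y \<in> carrier G \<Longrightarrow>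
   (phi ^^ k) (x \<otimes> y) = (phi ^^ k) x \<otimes> (phi ^^ (sig x k)) y"
proof (induct k)
  case 0 then show ?case by (simp add: sig_def)
next
  case (Suc k)
  have "(phi ^^ Suc k) (x \<otimes> y) = phi ((phi ^^ k) x \<otimes> (phi ^^ (sig x k)) y)" using Suc by simp
  also have "\<dots> = (phi ^^ Suc k) x \<otimes> (phi ^^ (pw ((phi ^^ k) x))) ((phi ^^ (sig x k)) y)"
    using Suc by (simp add: phi_mult)
  also have "\<dots> = (phi ^^ Suc k) x \<otimes> (phi ^^ (sig x (Suc k))) y"
    by (simp add: sig_def funpow_add add.commute)
  finally show ?case .
qed

lemma pw_mult: assumes "x \<in> carrier G" "y \<in> carrier G"
  shows "pw (x \<otimes> y) mod n = sig y (pw x) mod n"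
proof -
  have "\<forall>z\<in>carrier G. (phi ^^ pw (x \<otimes> y)) z = (phi ^^ sig y (pw x)) z"
  proof
    fix z assume z: "z \<in> carrier G"
    have "phi (x \<otimes> y) \<otimes> (phi ^^ pw (x \<otimes> y)) z = phi (x \<otimes> y \<otimes> z)"
      using assms z by (simp add: phi_mult)
    also have "\<dots> = phi (x \<otimes> (y \<otimes> z))" using assms z by (simp add: m_assoc)
    also have "\<dots> = phi x \<otimes> ((phi ^^ pw x) y \<otimes> (phi ^^ sig y (pw x)) z)"
      using assms z by (simp add: phi_mult iter_mult)
    also have "\<dots> = phi (x \<otimes> y) \<otimes> (phi ^^ sig y (pw x)) z"
      using assms z by (simp add: phi_mult m_assoc)
    finally show "(phi ^^ pw (x \<otimes> y)) z = (phi ^^ sig y (pw x)) z"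
      using assms z by simp
  qed
  then show ?thesis using pow_eq_iff by blast
qed

lemma sum_mod_cong: "(\<And>i. i \<in> A \<Longrightarrow> f i mod m = g i mod m) \<Longrightarrow> sum f A mod (m::nat) = sum g A mod m"
  by (metis (no_types, lifting) mod_sum_eq sum.cong)

lemma sig_K: "x \<in> K \<Longrightarrow> sig x k mod n = k mod n"
proof -
  assume x: "x \<in> K"
  have "sig x k mod n = (\<Sum>i<k. 1) mod n" unfolding sig_def
    by (rule sum_mod_cong) (use x K_char in \<open>auto simp: skew_kernel_def\<close>)
  then show ?thesis by simp
qed

lemma K_iter_mult: "x \<in> K \<Longrightarrow> y \<in> carrier G \<Longrightarrow> (phi ^^ k) (x \<otimes> y) = (phi ^^ k) x \<otimes> (phi ^^ k) y"
  using iter_mult[of x y k] K_sub sig_K[of x k] pow_mod[of y] by (metis subsetD)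

lemma K_subgroup: "subgroup K G"
proof (rule finite_closed_subgroup)
  show "finite K" using K_sub fin finite_subset by blast
  show "K \<subseteq> carrier G" by (rule K_sub)
  show "\<one> \<in> K" using K_char one_Ker by simp
  fix x y
  assume xy: "x \<in> K" "y \<in> K"
  have xc: "x \<in> carrier G" "y \<in> carrier G" using xy K_sub by auto
  have "(phi ^^ j) (x \<otimes> y) \<in> Ker" for j
  proof -
    have "(phi ^^ j) x \<in> Ker" "(phi ^^ j) y \<in> Ker" using xy K_char by blast+
    then show ?thesis using K_iter_mult[OF xy(1) xc(2), of j] Ker_mult by simp
  qed
  then show "x \<otimes> y \<in> K" using K_char xc by auto
qed

lemma conj_Ker: assumes g: "g \<in> carrier G" and x: "x \<in> K"
  shows "g \<otimes> x \<otimes> inv g \<in> Ker"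
proof (cases "n = 1")
  case True then show ?thesis using g x K_sub by (auto simp: skew_kernel_def)
next
  case False
  then have n1: "1 < n" using n_pos by linarith
  have xc: "x \<in> carrier G" using x K_sub by auto
  have ig: "inv g \<in> carrier G" using g by simp
  have "pw (g \<otimes> (x \<otimes> inv g)) mod n = sig (x \<otimes> inv g) (pw g) mod n"
    using pw_mult g xc ig by simp
  also have "\<dots> = sig (inv g) (pw g) mod n"
    unfolding sig_def
  proof (rule sum_mod_cong)
    fix i
    have a: "(phi ^^ i) x \<in> Ker" using x K_char by auto
    have "pw ((phi ^^ i) (x \<otimes> inv g)) mod n = pw ((phi ^^ i) x \<otimes> (phi ^^ i) (inv g)) mod n"
      using K_iter_mult x ig by simp
    also have "\<dots> = sig ((phi ^^ i) (inv g)) (pw ((phi ^^ i) x)) mod n"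
      using pw_mult xc ig by simp
    also have "\<dots> = pw ((phi ^^ i) (inv g)) mod n"
      using Ker_pw1[OF n1 a] by (simp add: sig_def)
    finally show "pw ((phi ^^ i) (x \<otimes> inv g)) mod n = pw ((phi ^^ i) (inv g)) mod n" .
  qed
  also have "\<dots> = pw (g \<otimes> inv g) mod n" by (rule pw_mult[OF g ig, symmetric])
  also have "\<dots> = 1 mod n" using one_Ker g by (simp add: skew_kernel_def)
  finally show ?thesis using g xc by (simp add: skew_kernel_def m_assoc)
qed

lemma conj_iter: assumes g: "g \<in> carrier G" and x: "x \<in> K"
  shows "(phi ^^ j) (g \<otimes> x \<otimes> inv g) = (phi ^^ j) g \<otimes> (phi ^^ sig g j) x \<otimes> inv ((phi ^^ j) g)"
proof -
  have xc: "x \<in> carrier G" using x K_sub by auto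
  have ig: "inv g \<in> carrier G" using g by simp
  define s where "s = sig g j"
  have "\<one> = (phi ^^ j) (g \<otimes> inv g)" using g by simp
  also have "\<dots> = (phi ^^ j) g \<otimes> (phi ^^ s) (inv g)" by (rule iter_mult[OF g ig, of j, folded s_def])
  finally have "inv ((phi ^^ j) g) = (phi ^^ s) (inv g)"
    using g ig by (metis inv_equality inv_comm phik_closed)
  moreover have "(phi ^^ j) (g \<otimes> x \<otimes> inv g) = (phi ^^ j) g \<otimes> ((phi ^^ s) x \<otimes> (phi ^^ s) (inv g))"
  proof -
    have "(phi ^^ j) (g \<otimes> x \<otimes> inv g) = (phi ^^ j) (g \<otimes> (x \<otimes> inv g))" using g xc ig by (simp add: m_assoc)
    also have "\<dots> = (phi ^^ j) g \<otimes> (phi ^^ s) (x \<otimes> inv g)"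
      using iter_mult[OF g m_closed[OF xc ig], of j] s_def by simp
    also have "(phi ^^ s) (x \<otimes> inv g) = (phi ^^ s) x \<otimes> (phi ^^ s) (inv g)"
      by (rule K_iter_mult[OF x ig])
    finally show ?thesis .
  qed
  ultimately show ?thesis using g xc ig s_def by (simp add: m_assoc)
qed

lemma K_normal: "K \<lhd> G"
proof -
  have "g \<otimes> x \<otimes> inv g \<in> K" if g: "g \<in> carrier G" and x: "x \<in> K" for g x
  proof -
    have "(phi ^^ j) (g \<otimes> x \<otimes> inv g) \<in> Ker" for j
      using conj_iter[OF g x, of j] conj_Ker[of "(phi ^^ j) g" "(phi ^^ sig g j) x"] g x K_phik
      by simp
    then show ?thesis using K_char g x K_sub by auto
  qed
  then show ?thesis using normal_inv_iff K_subgroup by blast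
qed

lemma phi_coset: assumes x: "x \<in> carrier G" and y: "y \<in> K #> x"
  shows "K #> phi y = K #> phi x"
proof -
  obtain k where k: "k \<in> K" "y = k \<otimes> x" using y unfolding r_coset_def by auto
  have kc: "k \<in> Ker" "k \<in> carrier G" using k K_Ker K_sub by auto
  have "phi y = phi k \<otimes> phi x" using k kc Ker_iff x by simp
  moreover have "phi k \<in> K" using phiK k by auto
  ultimately have "phi y \<in> K #> phi x" using x K_sub by (simp add: rcosI)
  then show ?thesis using repr_independence K_subgroup x by (metis phi_closed)
qed

lemma S_iff: "x \<in> skew_smooth G phi pw \<longleftrightarrow> x \<in> carrier G \<and> K #> phi x = K #> x"
proof -
  interpret N: normal K G by (rule K_normal)
  have "x \<in> carrier G \<Longrightarrow> phi x \<in> K #> x \<longleftrightarrow> K #> phi x = K #> x"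
    using repr_independence repr_independenceD K_subgroup by (metis phi_closed)
  then show ?thesis unfolding skew_smooth_def using N.coset_eq by auto
qed

end

theorem mainTheorem5:
  fixes G (structure) and phi :: "'a \<Rightarrow> 'a" and pw :: "'a \<Rightarrow> nat"
  assumes "group G" and "finite (carrier G)" and "skew_morphism G phi pw"
  defines "K \<equiv> skew_core G phi pw"
      and "S \<equiv> skew_smooth G phi pw"
      and "F \<equiv> fixset (carrier (G Mod skew_core G phi pw)) (induced_skew G (skew_core G phi pw) phi)"
  shows "subgroup S G \<and> phi ` S = S
         \<and> F = (\<lambda>x. K #> x) ` S
         \<and> (S = K \<longleftrightarrow> F = {\<one>\<^bsub>G Mod K\<^esub>})
         \<and> (S = carrier G \<longleftrightarrow> F = carrier (G Mod K))
         \<and> (K = {\<one>} \<longrightarrow> S = fixset (carrier G) phi)"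
proof -
  interpret skw G phi pw using assms(1-3) by (simp add: skw_def skw_axioms_def)
  interpret N: normal K G unfolding K_def by (rule K_normal)
  have Kc: "K \<subseteq> carrier G" unfolding K_def by (rule K_sub)
  have Ksg: "subgroup K G" by (rule N.subgroup_axioms)
  have Siff: "x \<in> S \<longleftrightarrow> x \<in> carrier G \<and> K #> phi x = K #> x" for x
    unfolding S_def K_def by (rule S_iff)
  have pc: "x \<in> carrier G \<Longrightarrow> y \<in> K #> x \<Longrightarrow> K #> phi y = K #> phi x" for x y
    unfolding K_def by (rule phi_coset)
  have Sc: "S \<subseteq> carrier G" using Siff by auto
  have iterS: "x \<in> S \<Longrightarrow> K #> (phi ^^ j) x = K #> x" for x j
  proof (induct j)
    case (Suc j)
    have xc: "x \<in> carrier G" using Suc Siff by auto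
    have "(phi ^^ j) x \<in> K #> x"
      using repr_independenceD[OF Ksg phik_closed[OF xc, of j]] Suc by simp
    then have "K #> phi ((phi ^^ j) x) = K #> phi x" using pc xc by blast
    then show ?case using Suc Siff by simp
  qed simp
  have phikS: "x \<in> S \<Longrightarrow> (phi ^^ k) x \<in> S" for x k
  proof -
    assume x: "x \<in> S"
    have xc: "x \<in> carrier G" using x Sc by auto
    have "K #> phi ((phi ^^ k) x) = K #> (phi ^^ Suc k) x" by simp
    also have "\<dots> = K #> (phi ^^ k) x" using iterS[OF x, of "Suc k"] iterS[OF x, of k] by simp
    finally show ?thesis using Siff xc by simp
  qed
  have sub: "subgroup S G"
  proof (rule finite_closed_subgroup)
    show "finite S" using Sc fin finite_subset by blast
    show "S \<subseteq> carrier G" by (rule Sc)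
    show "\<one> \<in> S" using Siff by simp
    fix x y assume x: "x \<in> S" and y: "y \<in> S"
    have xc: "x \<in> carrier G" and yc: "y \<in> carrier G" using x y Sc by auto
    have "K #> phi (x \<otimes> y) = K #> (phi x \<otimes> (phi ^^ pw x) y)" using xc yc by (simp add: phi_mult)
    also have "\<dots> = (K #> phi x) <#> (K #> (phi ^^ pw x) y)" using xc yc by (simp add: N.rcos_sum)
    also have "\<dots> = (K #> x) <#> (K #> y)" using iterS[OF y] x Siff by simp
    also have "\<dots> = K #> (x \<otimes> y)" using xc yc by (simp add: N.rcos_sum)
    finally show "x \<otimes> y \<in> S" using Siff xc yc by simp
  qed
  have phiS: "phi ` S = S"
  proof
    show "phi ` S \<subseteq> S" using phikS[of _ 1] by auto
    show "S \<subseteq> phi ` S"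
    proof
      fix x assume x: "x \<in> S"
      have "phi ((phi ^^ (n - 1)) x) = (phi ^^ n) x" using n_pos
        by (metis Suc_diff_1 funpow.simps(2) o_apply)
      then show "x \<in> phi ` S" using n_id x Sc phikS by (metis image_eqI subsetD)
    qed
  qed
  have ind: "x \<in> carrier G \<Longrightarrow> induced_skew G K phi (K #> x) = K #> phi x" for x
  proof -
    assume xc: "x \<in> carrier G"
    have "x \<in> K #> x" using xc Ksg by (rule rcos_self)
    then have "(SOME y. y \<in> K #> x) \<in> K #> x" by (rule someI)
    then show ?thesis unfolding induced_skew_def using pc xc by simp
  qed
  have carrF: "carrier (G Mod K) = (\<lambda>x. K #> x) ` carrier G" by (rule carrier_FactGroup)
  have Feq: "F = (\<lambda>x. K #> x) ` S"
  proof
    show "F \<subseteq> (\<lambda>x. K #> x) ` S"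
    proof
      fix C assume "C \<in> F"
      then obtain x where x: "x \<in> carrier G" "C = K #> x" "induced_skew G K phi C = C"
        unfolding F_def fixset_def K_def[symmetric] carrF by auto
      then have "x \<in> S" using ind Siff by simp
      then show "C \<in> (\<lambda>x. K #> x) ` S" using x by auto
    qed
    show "(\<lambda>x. K #> x) ` S \<subseteq> F"
    proof
      fix C assume "C \<in> (\<lambda>x. K #> x) ` S"
      then obtain x where x: "x \<in> S" "C = K #> x" by auto
      have xc: "x \<in> carrier G" using x Sc by auto
      show "C \<in> F" unfolding F_def fixset_def K_def[symmetric] carrF
        using x xc ind Siff by auto
    qed
  qed
  have KS: "K \<subseteq> S"
  proof
    fix k assume k: "k \<in> K"
    have kc: "k \<in> carrier G" using k Kc by auto
    have "phi k \<in> K" using phiK k unfolding K_def by blast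
    then have "K #> phi k = K" "K #> k = K" using N.rcos_const[OF is_group] k by blast+
    then show "k \<in> S" using Siff kc by simp
  qed
  have i: "S = K \<longleftrightarrow> F = {\<one>\<^bsub>G Mod K\<^esub>}"
  proof
    assume "S = K"
    then have "F = (\<lambda>x. K #> x) ` K" using Feq by simp
    also have "\<dots> = (\<lambda>x. K) ` K" using N.rcos_const[OF is_group] by (rule image_cong[OF refl])
    also have "\<dots> = {K}" using N.one_closed by blast
    finally show "F = {\<one>\<^bsub>G Mod K\<^esub>}" by simp
  next
    assume F1: "F = {\<one>\<^bsub>G Mod K\<^esub>}"
    have "S \<subseteq> K"
    proof
      fix s assume s: "s \<in> S"
      have sc: "s \<in> carrier G" using s Sc by auto
      have "K #> s = K" using F1 Feq s by auto
      then show "s \<in> K" using rcos_self[OF sc Ksg] by simp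
    qed
    then show "S = K" using KS by auto
  qed
  have ii: "S = carrier G \<longleftrightarrow> F = carrier (G Mod K)"
  proof
    assume "S = carrier G" then show "F = carrier (G Mod K)" using Feq carrF by simp
  next
    assume FF: "F = carrier (G Mod K)"
    have "carrier G \<subseteq> S"
    proof
      fix g assume g: "g \<in> carrier G"
      have "K #> g \<in> F" using FF carrF g by simp
      then obtain s where s: "s \<in> S" "K #> g = K #> s" using Feq by auto
      have sc: "s \<in> carrier G" using s Sc by auto
      have "g \<in> K #> s" using repr_independenceD[OF Ksg g] s by simp
      then have "K #> phi g = K #> phi s" using pc sc by blast
      also have "\<dots> = K #> g" using s Siff by simp
      finally show "g \<in> S" using Siff g by simp
    qed
    then show "S = carrier G" using Sc by auto
  qed
  have iii: "K = {\<one>} \<longrightarrow> S = fixset (carrier G) phi"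
  proof
    assume K1: "K = {\<one>}"
    have "x <# K = {x}" if "x \<in> carrier G" for x using that K1 by (simp add: l_coset_def)
    then show "S = fixset (carrier G) phi"
      unfolding S_def skew_smooth_def fixset_def K_def[symmetric] by auto
  qed
  show ?thesis using sub phiS Feq i ii iii by blast
qed

end
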